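(* Let $\Gamma$ be a group acting by isometries on a $\delta$-hyperbolic length space $X$. Assume that $\Gamma$ has no parabolic subgroup and that every elliptic subgroup of $\Gamma$ is finite cyclic. Then $\nu(\Gamma,X)\leq 2$.
   Context: For a subgroup $H\le\Gamma$, its limit set $\Lambda(H)\subset\partial X$ is the set of accumulation points of an $H$-orbit. $H$ is elliptic (resp. parabolic, lineal) if $\Lambda(H)$ is empty (resp. has exactly one point, exactly two points), non-elementary if $\Lambda(H)$ has at least three points, and elementary otherwise. An element is loxodromic if its orbits have exactly two accumulation points in $\partial X$. The $\nu$-invariant $\nu(\Gamma,X)$ is the smallest integer $m$ such that, for all $\gamma_0,\gamma\in\Gamma$ with $\gamma$ loxodromic, if $\gamma_0,\gamma\gamma_0\gamma^{-1},\dots,\gamma^m\gamma_0\gamma^{-m}$ generate an elementary subgroup then so do $\gamma_0$ and $\gamma$. *)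

theory Defs
  imports Complex_Main "HOL-Algebra.Generated_Groups" "HOL-Library.Extended_Nat"
begin

text \<open>The space X is the whole carrier type 'x of class metric_space.\<close>

definition gromov_product :: "'x::metric_space \<Rightarrow> 'x \<Rightarrow> 'x \<Rightarrow> real" where
  "gromov_product w x y = (dist w x + dist w y - dist x y) / 2"

definition length_space :: "'x::metric_space itself \<Rightarrow> bool" where
  "length_space _ \<longleftrightarrow>
     (\<forall>(x::'x) y. \<forall>e>0. \<exists>p :: real \<Rightarrow> 'x.
        continuous_on {0..1} p \<and> p 0 = x \<and> p 1 = y \<and>
        (\<forall>(k::nat) (t::nat \<Rightarrow> real).
           0 \<le> t 0 \<and> t k \<le> 1 \<and> (\<forall>i<k. t i \<le> t (Suc i)) \<longrightarrow>
           (\<Sum>i<k. dist (p (t i)) (p (t (Suc i)))) \<le> dist x y + e))"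

definition delta_hyperbolic :: "'x::metric_space itself \<Rightarrow> real \<Rightarrow> bool" where
  "delta_hyperbolic _ \<delta> \<longleftrightarrow> 0 \<le> \<delta> \<and>
     (\<forall>(w::'x) x y z. min (gromov_product w x y) (gromov_product w y z) - \<delta>
                          \<le> gromov_product w x z)"

definition gromov_seq :: "(nat \<Rightarrow> 'x::metric_space) \<Rightarrow> bool" where
  "gromov_seq s \<longleftrightarrow>
     (\<forall>w K. \<exists>N. \<forall>m\<ge>N. \<forall>n\<ge>N. K \<le> gromov_product w (s m) (s n))"

definition gromov_equiv :: "(nat \<Rightarrow> 'x::metric_space) \<Rightarrow> (nat \<Rightarrow> 'x) \<Rightarrow> bool" where
  "gromov_equiv s t \<longleftrightarrow>
     (\<forall>w K. \<exists>N. \<forall>m\<ge>N. \<forall>n\<ge>N. K \<le> gromov_product w (s m) (t n))"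

text \<open>A boundary point is the equivalence class of a sequence converging at infinity;
  a sequence converges to the boundary point xi iff it belongs to xi.\<close>
definition gromov_boundary :: "(nat \<Rightarrow> 'x::metric_space) set set" where
  "gromov_boundary = {{t. gromov_seq t \<and> gromov_equiv s t} | s. gromov_seq s}"

definition isometric_action :: "('g, 'b) monoid_scheme \<Rightarrow> ('g \<Rightarrow> 'x::metric_space \<Rightarrow> 'x) \<Rightarrow> bool" where
  "isometric_action G act \<longleftrightarrow>
     act \<one>\<^bsub>G\<^esub> = id \<and>
     (\<forall>g\<in>carrier G. \<forall>h\<in>carrier G. act (g \<otimes>\<^bsub>G\<^esub> h) = act g \<circ> act h) \<and>
     (\<forall>g\<in>carrier G. \<forall>x y. dist (act g x) (act g y) = dist x y)"

definition limit_set :: "('g \<Rightarrow> 'x::metric_space \<Rightarrow> 'x) \<Rightarrow> 'g set \<Rightarrow> (nat \<Rightarrow> 'x) set set" where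
  "limit_set act H = {\<xi> \<in> gromov_boundary.
      \<exists>x s. (\<forall>n. s n \<in> (\<lambda>h. act h x) ` H) \<and> s \<in> \<xi>}"

definition elliptic :: "('g \<Rightarrow> 'x::metric_space \<Rightarrow> 'x) \<Rightarrow> 'g set \<Rightarrow> bool" where
  "elliptic act H \<longleftrightarrow> limit_set act H = {}"

definition parabolic :: "('g \<Rightarrow> 'x::metric_space \<Rightarrow> 'x) \<Rightarrow> 'g set \<Rightarrow> bool" where
  "parabolic act H \<longleftrightarrow> (\<exists>\<xi>. limit_set act H = {\<xi>})"

definition lineal :: "('g \<Rightarrow> 'x::metric_space \<Rightarrow> 'x) \<Rightarrow> 'g set \<Rightarrow> bool" where
  "lineal act H \<longleftrightarrow> (\<exists>\<xi> \<eta>. \<xi> \<noteq> \<eta> \<and> limit_set act H = {\<xi>, \<eta>})"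

definition non_elementary :: "('g \<Rightarrow> 'x::metric_space \<Rightarrow> 'x) \<Rightarrow> 'g set \<Rightarrow> bool" where
  "non_elementary act H \<longleftrightarrow> \<not> (finite (limit_set act H) \<and> card (limit_set act H) \<le> 2)"

definition elementary :: "('g \<Rightarrow> 'x::metric_space \<Rightarrow> 'x) \<Rightarrow> 'g set \<Rightarrow> bool" where
  "elementary act H \<longleftrightarrow> \<not> non_elementary act H"

definition loxodromic :: "('g, 'b) monoid_scheme \<Rightarrow> ('g \<Rightarrow> 'x::metric_space \<Rightarrow> 'x) \<Rightarrow> 'g \<Rightarrow> bool" where
  "loxodromic G act g \<longleftrightarrow> lineal act (generate G {g})"

definition nu_property :: "('g, 'b) monoid_scheme \<Rightarrow> ('g \<Rightarrow> 'x::metric_space \<Rightarrow> 'x) \<Rightarrow> nat \<Rightarrow> bool" where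
  "nu_property G act m \<longleftrightarrow>
     (\<forall>g0\<in>carrier G. \<forall>g\<in>carrier G. loxodromic G act g \<longrightarrow>
        elementary act (generate G
           ((\<lambda>i. (g [^]\<^bsub>G\<^esub> i) \<otimes>\<^bsub>G\<^esub> g0 \<otimes>\<^bsub>G\<^esub> inv\<^bsub>G\<^esub> (g [^]\<^bsub>G\<^esub> i)) ` {0..m})) \<longrightarrow>
        elementary act (generate G {g0, g}))"

text \<open>Smallest such m (infinity if none exists).\<close>
definition nu_invariant :: "('g, 'b) monoid_scheme \<Rightarrow> ('g \<Rightarrow> 'x::metric_space \<Rightarrow> 'x) \<Rightarrow> enat" where
  "nu_invariant G act = Inf (enat ` {m. nu_property G act m})"

end

theory Submission
  imports Defs "HOL-Algebra.Multiplicative_Group"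
begin


lemma gp_sym: "gromov_product w x y = gromov_product w y x"
  unfolding gromov_product_def by (simp add: dist_commute)

lemma gp_self: "gromov_product w x x = dist w x"
  unfolding gromov_product_def by simp

lemma gp_lip: "\<bar>gromov_product w x y - gromov_product w x' y\<bar> \<le> dist x x'"
proof -
  have 1: "dist x y \<le> dist x x' + dist x' y" by (rule dist_triangle)
  have 2: "dist x' y \<le> dist x x' + dist x y" using dist_triangle[of x' y x] by (simp add: dist_commute)
  have 3: "dist w x \<le> dist w x' + dist x x'" using dist_triangle[of w x x'] by (simp add: dist_commute)
  have 4: "dist w x' \<le> dist w x + dist x x'" using dist_triangle[of w x' x] by (simp add: dist_commute)
  show ?thesis unfolding gromov_product_def abs_le_iff using 1 2 3 4 by (simp add: field_simps)
qed

lemma gp_base: "\<bar>gromov_product w x y - gromov_product w' x y\<bar> \<le> dist w w'"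
proof -
  have 1: "dist w x \<le> dist w w' + dist w' x" by (rule dist_triangle)
  have 2: "dist w' x \<le> dist w w' + dist w x" using dist_triangle[of w' x w] by (simp add: dist_commute)
  have 3: "dist w y \<le> dist w w' + dist w' y" by (rule dist_triangle)
  have 4: "dist w' y \<le> dist w w' + dist w y" using dist_triangle[of w' y w] by (simp add: dist_commute)
  show ?thesis unfolding gromov_product_def abs_le_iff using 1 2 3 4 by (simp add: field_simps)
qed

lemma gp_ident: "gromov_product w p a + gromov_product w p b = dist w p + gromov_product w a b - gromov_product p a b"
  unfolding gromov_product_def by (simp add: dist_commute field_simps)

lemma hyp: "delta_hyperbolic TYPE('x::metric_space) \<delta> \<Longrightarrow>
   min (gromov_product w x y) (gromov_product w y z) - \<delta> \<le> gromov_product w x (z::'x)"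
  unfolding delta_hyperbolic_def by blast

lemma equiv_base:
  assumes "\<And>K. \<exists>N. \<forall>m\<ge>N. \<forall>n\<ge>N. K \<le> gromov_product x (s m) (t n)"
  shows "gromov_equiv s t"
  unfolding gromov_equiv_def
proof (intro allI)
  fix w K
  obtain N where N: "\<forall>m\<ge>N. \<forall>n\<ge>N. K + dist w x \<le> gromov_product x (s m) (t n)" using assms by blast
  then show "\<exists>N. \<forall>m\<ge>N. \<forall>n\<ge>N. K \<le> gromov_product w (s m) (t n)"
  proof (intro exI allI impI)
    fix m n assume "N \<le> m" "N \<le> n"
    then have "K + dist w x \<le> gromov_product x (s m) (t n)" using N by blast
    moreover have "\<bar>gromov_product w (s m) (t n) - gromov_product x (s m) (t n)\<bar> \<le> dist w x" by (rule gp_base)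
    ultimately show "K \<le> gromov_product w (s m) (t n)" by (simp add: abs_le_iff)
  qed
qed

lemma equiv_sym: "gromov_equiv s t \<Longrightarrow> gromov_equiv t s"
  unfolding gromov_equiv_def using gp_sym by metis

lemma seq_equiv: "gromov_seq s \<longleftrightarrow> gromov_equiv s s"
  unfolding gromov_seq_def gromov_equiv_def by simp

lemma equiv_trans:
  assumes d: "delta_hyperbolic TYPE('x::metric_space) \<delta>"
    and st: "gromov_equiv s (t::nat\<Rightarrow>'x)" and tu: "gromov_equiv t u"
  shows "gromov_equiv s u"
  unfolding gromov_equiv_def
proof (intro allI)
  fix w K
  obtain N1 where N1: "\<forall>m\<ge>N1. \<forall>n\<ge>N1. K + \<delta> \<le> gromov_product w (s m) (t n)"
    using st unfolding gromov_equiv_def by blast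
  obtain N2 where N2: "\<forall>m\<ge>N2. \<forall>n\<ge>N2. K + \<delta> \<le> gromov_product w (t m) (u n)"
    using tu unfolding gromov_equiv_def by blast
  show "\<exists>N. \<forall>m\<ge>N. \<forall>n\<ge>N. K \<le> gromov_product w (s m) (u n)"
  proof (intro exI allI impI)
    fix m n assume m: "max N1 N2 \<le> m" and n: "max N1 N2 \<le> n"
    have "min (gromov_product w (s m) (t (max N1 N2))) (gromov_product w (t (max N1 N2)) (u n)) - \<delta>
       \<le> gromov_product w (s m) (u n)" by (rule hyp[OF d])
    moreover have "K + \<delta> \<le> gromov_product w (s m) (t (max N1 N2))" using N1 m by auto
    moreover have "K + \<delta> \<le> gromov_product w (t (max N1 N2)) (u n)" using N2 n by auto
    ultimately show "K \<le> gromov_product w (s m) (u n)" by linarith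
  qed
qed

definition cls :: "(nat \<Rightarrow> 'x::metric_space) \<Rightarrow> (nat \<Rightarrow> 'x) set" where
  "cls s = {t. gromov_seq t \<and> gromov_equiv s t}"

lemma cls_in: "gromov_seq s \<Longrightarrow> cls s \<in> gromov_boundary"
  unfolding cls_def gromov_boundary_def by blast

lemma cls_mem: "gromov_seq s \<Longrightarrow> s \<in> cls s"
  unfolding cls_def using seq_equiv by blast

lemma cls_eq:
  assumes d: "delta_hyperbolic TYPE('x::metric_space) \<delta>" and "gromov_equiv s (t::nat\<Rightarrow>'x)"
  shows "cls s = cls t"
  unfolding cls_def using assms equiv_trans[OF d] equiv_sym by blast

lemma bd_cls:
  assumes d: "delta_hyperbolic TYPE('x::metric_space) \<delta>" and "\<xi> \<in> gromov_boundary" "(t::nat\<Rightarrow>'x) \<in> \<xi>"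
  shows "\<xi> = cls t \<and> gromov_seq t"
proof -
  obtain s where "gromov_seq s" "\<xi> = cls s" using assms(2) unfolding gromov_boundary_def cls_def by blast
  then show ?thesis using assms(3) cls_eq[OF d] unfolding cls_def by blast
qed

lemma cls_eq_iff:
  assumes d: "delta_hyperbolic TYPE('x::metric_space) \<delta>" and "gromov_seq s" "gromov_seq (t::nat\<Rightarrow>'x)"
  shows "cls s = cls t \<longleftrightarrow> gromov_equiv s t"
  using assms cls_eq[OF d] cls_mem unfolding cls_def by blast

lemma seq_unbounded:
  assumes "gromov_seq s" shows "\<exists>N. \<forall>n\<ge>N. K \<le> dist x (s n)"
proof -
  obtain N where "\<forall>m\<ge>N. \<forall>n\<ge>N. K \<le> gromov_product x (s m) (s n)" using assms unfolding gromov_seq_def by blast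
  then show ?thesis using gp_self by metis
qed

lemma nonequiv_bound:
  assumes d: "delta_hyperbolic TYPE('x::metric_space) \<delta>" and ne: "\<not> gromov_equiv \<alpha> (\<beta>::nat\<Rightarrow>'x)"
  shows "\<exists>C. \<forall>\<alpha>' \<beta>'. gromov_equiv \<alpha> \<alpha>' \<longrightarrow> gromov_equiv \<beta> \<beta>' \<longrightarrow>
           (\<exists>N. \<forall>m\<ge>N. \<forall>n\<ge>N. gromov_product x (\<alpha>' m) (\<beta>' n) < C)"
proof -
  obtain w K where wK: "\<forall>N. \<exists>m\<ge>N. \<exists>n\<ge>N. gromov_product w (\<alpha> m) (\<beta> n) < K"
    using ne unfolding gromov_equiv_def by (meson not_le)
  define L where "L = K + dist x w"
  have wL: "\<forall>N. \<exists>m\<ge>N. \<exists>n\<ge>N. gromov_product x (\<alpha> m) (\<beta> n) < L"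
  proof
    fix N obtain m n where "m \<ge> N" "n \<ge> N" "gromov_product w (\<alpha> m) (\<beta> n) < K" using wK by blast
    then show "\<exists>m\<ge>N. \<exists>n\<ge>N. gromov_product x (\<alpha> m) (\<beta> n) < L"
      using gp_base[of x "\<alpha> m" "\<beta> n" w] unfolding L_def by (intro exI[of _ m] exI[of _ n]) auto
  qed
  show ?thesis
  proof (intro exI[of _ "L + 2*\<delta>"] allI impI)
    fix \<alpha>' \<beta>' assume a: "gromov_equiv \<alpha> \<alpha>'" and b: "gromov_equiv \<beta> \<beta>'"
    obtain N1 where N1: "\<forall>m\<ge>N1. \<forall>n\<ge>N1. L + 2*\<delta> \<le> gromov_product x (\<alpha> m) (\<alpha>' n)"
      using a unfolding gromov_equiv_def by blast
    obtain N2 where N2: "\<forall>m\<ge>N2. \<forall>n\<ge>N2. L + 2*\<delta> \<le> gromov_product x (\<beta> m) (\<beta>' n)"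
      using b unfolding gromov_equiv_def by blast
    show "\<exists>N. \<forall>m\<ge>N. \<forall>n\<ge>N. gromov_product x (\<alpha>' m) (\<beta>' n) < L + 2*\<delta>"
    proof (intro exI allI impI)
      fix m0 n0 assume m0: "max N1 N2 \<le> m0" and n0: "max N1 N2 \<le> n0"
      obtain m n where m: "m \<ge> max N1 N2" and n: "n \<ge> max N1 N2" and lt: "gromov_product x (\<alpha> m) (\<beta> n) < L"
        using wL by blast
      show "gromov_product x (\<alpha>' m0) (\<beta>' n0) < L + 2*\<delta>"
      proof (rule ccontr)
        assume "\<not> ?thesis"
        then have c: "L + 2*\<delta> \<le> gromov_product x (\<alpha>' m0) (\<beta>' n0)" by simp
        have h1: "min (gromov_product x (\<alpha> m) (\<alpha>' m0)) (gromov_product x (\<alpha>' m0) (\<beta>' n0)) - \<delta>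
                 \<le> gromov_product x (\<alpha> m) (\<beta>' n0)" by (rule hyp[OF d])
        have h2: "min (gromov_product x (\<alpha> m) (\<beta>' n0)) (gromov_product x (\<beta>' n0) (\<beta> n)) - \<delta>
                 \<le> gromov_product x (\<alpha> m) (\<beta> n)" by (rule hyp[OF d])
        have e1: "L + 2*\<delta> \<le> gromov_product x (\<alpha> m) (\<alpha>' m0)" using N1 m m0 by auto
        have e2: "L + 2*\<delta> \<le> gromov_product x (\<beta>' n0) (\<beta> n)" using N2 n n0 gp_sym by (metis max.boundedE)
        from h1 e1 c have "L + \<delta> \<le> gromov_product x (\<alpha> m) (\<beta>' n0)" by linarith
        moreover have "0 \<le> \<delta>" using d unfolding delta_hyperbolic_def by simp
        ultimately show False using h2 e2 lt by (simp add: min_def split: if_splits)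
      qed
    qed
  qed
qed


lemma gp_lip2: "\<bar>gromov_product w x y - gromov_product w x y'\<bar> \<le> dist y y'"
proof -
  have "gromov_product w y x = gromov_product w x y" "gromov_product w y' x = gromov_product w x y'" by (rule gp_sym)+
  then show ?thesis using gp_lip[of w y x y'] by simp
qed

lemma bd_equiv:
  assumes "gromov_seq s" and "\<And>n. dist (s n) (t n) \<le> M"
  shows "gromov_equiv s t \<and> gromov_seq t"
proof
  show "gromov_equiv s t" unfolding gromov_equiv_def
  proof (intro allI)
    fix w K
    obtain N where N: "\<forall>m\<ge>N. \<forall>n\<ge>N. K + M \<le> gromov_product w (s m) (s n)"
      using assms(1) unfolding gromov_seq_def by blast
    show "\<exists>N. \<forall>m\<ge>N. \<forall>n\<ge>N. K \<le> gromov_product w (s m) (t n)"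
    proof (intro exI[of _ N] allI impI)
      fix m n assume "N \<le> m" "N \<le> n"
      then have "K + M \<le> gromov_product w (s m) (s n)" using N by blast
      moreover have "\<bar>gromov_product w (s m) (s n) - gromov_product w (s m) (t n)\<bar> \<le> dist (s n) (t n)" by (rule gp_lip2)
      ultimately show "K \<le> gromov_product w (s m) (t n)" using assms(2)[of n] by (simp add: abs_le_iff)
    qed
  qed
  show "gromov_seq t" unfolding gromov_seq_def
  proof (intro allI)
    fix w K
    obtain N where N: "\<forall>m\<ge>N. \<forall>n\<ge>N. K + 2*M \<le> gromov_product w (s m) (s n)"
      using assms(1) unfolding gromov_seq_def by blast
    show "\<exists>N. \<forall>m\<ge>N. \<forall>n\<ge>N. K \<le> gromov_product w (t m) (t n)"
    proof (intro exI[of _ N] allI impI)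
      fix m n assume "N \<le> m" "N \<le> n"
      then have "K + 2*M \<le> gromov_product w (s m) (s n)" using N by blast
      moreover have "\<bar>gromov_product w (s m) (s n) - gromov_product w (s m) (t n)\<bar> \<le> dist (s n) (t n)" by (rule gp_lip2)
      moreover have "\<bar>gromov_product w (s m) (t n) - gromov_product w (t m) (t n)\<bar> \<le> dist (s m) (t m)" by (rule gp_lip)
      ultimately show "K \<le> gromov_product w (t m) (t n)" using assms(2)[of n] assms(2)[of m] by (simp add: abs_le_iff)
    qed
  qed
qed

context
  fixes G :: "('g, 'b) monoid_scheme" and act :: "'g \<Rightarrow> 'x::metric_space \<Rightarrow> 'x"
  assumes grp: "group G" and ia: "isometric_action G act"
begin

lemma act_mult: "g \<in> carrier G \<Longrightarrow> h \<in> carrier G \<Longrightarrow> act (g \<otimes>\<^bsub>G\<^esub> h) x = act g (act h x)"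
  using ia unfolding isometric_action_def by simp

lemma act_one: "act \<one>\<^bsub>G\<^esub> x = x"
  using ia unfolding isometric_action_def by simp

lemma act_inv1: "k \<in> carrier G \<Longrightarrow> act (inv\<^bsub>G\<^esub> k) (act k x) = x"
proof -
  assume k: "k \<in> carrier G"
  have "act (inv\<^bsub>G\<^esub> k) (act k x) = act (inv\<^bsub>G\<^esub> k \<otimes>\<^bsub>G\<^esub> k) x" using act_mult[of "inv\<^bsub>G\<^esub> k" k x] group.inv_closed[OF grp k] k by simp
  also have "\<dots> = x" using group.l_inv[OF grp k] act_one by simp
  finally show ?thesis .
qed

lemma act_inv2: "k \<in> carrier G \<Longrightarrow> act k (act (inv\<^bsub>G\<^esub> k) x) = x"
proof -
  assume k: "k \<in> carrier G"
  have "act k (act (inv\<^bsub>G\<^esub> k) x) = act (k \<otimes>\<^bsub>G\<^esub> inv\<^bsub>G\<^esub> k) x" using act_mult[of k "inv\<^bsub>G\<^esub> k" x] group.inv_closed[OF grp k] k by simp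
  also have "\<dots> = x" using group.r_inv[OF grp k] act_one by simp
  finally show ?thesis .
qed

lemma act_dist: "k \<in> carrier G \<Longrightarrow> dist (act k x) (act k y) = dist x y"
  using ia unfolding isometric_action_def by simp

lemma gp_act: "k \<in> carrier G \<Longrightarrow> gromov_product (act k w) (act k x) (act k y) = gromov_product w x y"
  unfolding gromov_product_def using act_dist by simp

lemma equiv_act:
  assumes k: "k \<in> carrier G" and st: "gromov_equiv s t"
  shows "gromov_equiv (\<lambda>n. act k (s n)) (\<lambda>n. act k (t n))"
proof (rule equiv_base[where x="act k (s 0)"])
  fix K
  obtain N where "\<forall>m\<ge>N. \<forall>n\<ge>N. K \<le> gromov_product (s 0) (s m) (t n)"
    using st unfolding gromov_equiv_def by blast
  then show "\<exists>N. \<forall>m\<ge>N. \<forall>n\<ge>N. K \<le> gromov_product (act k (s 0)) (act k (s m)) (act k (t n))"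
    by (simp add: gp_act[OF k]) blast
qed

lemma equiv_act_rev:
  assumes k: "k \<in> carrier G" and st: "gromov_equiv (\<lambda>n. act k (s n)) (\<lambda>n. act k (t n))"
  shows "gromov_equiv s t"
  using equiv_act[OF group.inv_closed[OF grp k] st] act_inv1[OF k] by simp

lemma seq_act: "k \<in> carrier G \<Longrightarrow> gromov_seq s \<Longrightarrow> gromov_seq (\<lambda>n. act k (s n))"
  unfolding seq_equiv by (rule equiv_act)

end

lemma LS_intro: "gromov_seq s \<Longrightarrow> (\<forall>n. s n \<in> (\<lambda>h. act h x) ` H) \<Longrightarrow> cls s \<in> limit_set act H"
  unfolding limit_set_def using cls_in cls_mem by blast

lemma LS_elim:
  assumes d: "delta_hyperbolic TYPE('x::metric_space) \<delta>" and "\<xi> \<in> limit_set (act::'g \<Rightarrow> 'x \<Rightarrow> 'x) H"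
  shows "\<exists>x s. (\<forall>n. s n \<in> (\<lambda>h. act h x) ` H) \<and> gromov_seq s \<and> \<xi> = cls s"
proof -
  obtain x s where s: "\<forall>n. s n \<in> (\<lambda>h. act h x) ` H" "s \<in> \<xi>" "\<xi> \<in> gromov_boundary"
    using assms(2) unfolding limit_set_def by blast
  then show ?thesis using bd_cls[OF d s(3) s(2)] by blast
qed

lemma LS_mono: "H \<subseteq> H' \<Longrightarrow> limit_set act H \<subseteq> limit_set act H'"
  unfolding limit_set_def by blast

lemma LS_finite:
  assumes "finite H" shows "limit_set act H = {}"
proof (rule ccontr)
  assume "limit_set act H \<noteq> {}"
  then obtain \<xi> x s where s: "\<forall>n. s n \<in> (\<lambda>h. act h x) ` H" and "s \<in> \<xi>" "\<xi> \<in> gromov_boundary"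
    unfolding limit_set_def by blast
  then have gs: "gromov_seq s" unfolding gromov_boundary_def by blast
  define M where "M = Max ((\<lambda>h. dist x (act h x)) ` H)"
  have "\<forall>n. dist x (s n) \<le> M"
  proof
    fix n obtain h where "h \<in> H" "s n = act h x" using s by blast
    then show "dist x (s n) \<le> M" unfolding M_def using assms by (simp add: Max_ge)
  qed
  moreover obtain N where "\<forall>n\<ge>N. M + 1 \<le> dist x (s n)" using seq_unbounded[OF gs] by blast
  ultimately have "M + 1 \<le> dist x (s N)" "dist x (s N) \<le> M" by auto
  then show False by linarith
qed

lemma LS_close:
  assumes d: "delta_hyperbolic TYPE('x::metric_space) \<delta>"
    and "gromov_seq s" and "\<forall>n. \<exists>y \<in> (\<lambda>h. act h x) ` H. dist (s n) y \<le> M"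
  shows "cls (s::nat\<Rightarrow>'x) \<in> limit_set act H"
proof -
  define t where "t n = (SOME y. y \<in> (\<lambda>h. act h x) ` H \<and> dist (s n) y \<le> M)" for n
  have t: "t n \<in> (\<lambda>h. act h x) ` H \<and> dist (s n) (t n) \<le> M" for n
  proof -
    have "\<exists>y. y \<in> (\<lambda>h. act h x) ` H \<and> dist (s n) y \<le> M" using assms(3) by blast
    then show ?thesis unfolding t_def by (rule someI_ex)
  qed
  have e: "gromov_equiv s t \<and> gromov_seq t" by (rule bd_equiv[OF assms(2)]) (use t in blast)
  have "cls t \<in> limit_set act H" by (rule LS_intro) (use t e in blast)+
  moreover have "cls s = cls t" using cls_eq[OF d, of s t] e by blast
  ultimately show ?thesis by simp
qed


lemma gp_nonneg: "0 \<le> gromov_product w x y"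
  unfolding gromov_product_def using dist_triangle[of x y w] by (simp add: dist_commute)

lemma pair_stab:
  fixes G :: "('g, 'b) monoid_scheme" and act :: "'g \<Rightarrow> 'x::metric_space \<Rightarrow> 'x"
  assumes d: "delta_hyperbolic TYPE('x) \<delta>" and grp: "group G" and ia: "isometric_action G act"
    and ga: "gromov_seq \<alpha>" and gb: "gromov_seq \<beta>" and ne: "\<not> gromov_equiv \<alpha> \<beta>"
    and Kc: "K \<subseteq> carrier G" and Ki: "\<forall>k\<in>K. inv\<^bsub>G\<^esub> k \<in> K"
    and P: "\<forall>k\<in>K. (gromov_equiv \<alpha> (\<lambda>n. act k (\<alpha> n)) \<or> gromov_equiv \<beta> (\<lambda>n. act k (\<alpha> n))) \<and>
                   (gromov_equiv \<alpha> (\<lambda>n. act k (\<beta> n)) \<or> gromov_equiv \<beta> (\<lambda>n. act k (\<beta> n)))"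
  shows "limit_set act K \<subseteq> {cls \<alpha>, cls \<beta>}"
proof
  fix \<xi> assume "\<xi> \<in> limit_set act K"
  then obtain x s where s: "\<forall>n. s n \<in> (\<lambda>h. act h x) ` K" and gs: "gromov_seq s" and xi: "\<xi> = cls s"
    using LS_elim[OF d] by blast
  have "gromov_equiv \<alpha> s \<or> gromov_equiv \<beta> s"
  proof (rule ccontr)
    assume "\<not> ?thesis"
    then have na: "\<not> gromov_equiv s \<alpha>" and nb: "\<not> gromov_equiv s \<beta>" using equiv_sym by blast+
    have ess: "gromov_equiv s s" using gs seq_equiv by blast
    have eaa: "gromov_equiv \<alpha> \<alpha>" using ga seq_equiv by blast
    have ebb: "gromov_equiv \<beta> \<beta>" using gb seq_equiv by blast
    obtain C1 where C1: "\<forall>\<alpha>' \<beta>'. gromov_equiv s \<alpha>' \<longrightarrow> gromov_equiv \<alpha> \<beta>' \<longrightarrow>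
           (\<exists>N. \<forall>m\<ge>N. \<forall>n\<ge>N. gromov_product x (\<alpha>' m) (\<beta>' n) < C1)"
      using nonequiv_bound[OF d na] by blast
    obtain N1 where N1: "\<forall>m\<ge>N1. \<forall>n\<ge>N1. gromov_product x (s m) (\<alpha> n) < C1"
      using C1[rule_format, of s \<alpha>] ess eaa by blast
    obtain C2 where C2: "\<forall>\<alpha>' \<beta>'. gromov_equiv s \<alpha>' \<longrightarrow> gromov_equiv \<beta> \<beta>' \<longrightarrow>
           (\<exists>N. \<forall>m\<ge>N. \<forall>n\<ge>N. gromov_product x (\<alpha>' m) (\<beta>' n) < C2)"
      using nonequiv_bound[OF d nb] by blast
    obtain N2 where N2: "\<forall>m\<ge>N2. \<forall>n\<ge>N2. gromov_product x (s m) (\<beta> n) < C2"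
      using C2[rule_format, of s \<beta>] ess ebb by blast
    obtain C0 where C0: "\<forall>\<alpha>' \<beta>'. gromov_equiv \<alpha> \<alpha>' \<longrightarrow> gromov_equiv \<beta> \<beta>' \<longrightarrow>
           (\<exists>N. \<forall>m\<ge>N. \<forall>n\<ge>N. gromov_product x (\<alpha>' m) (\<beta>' n) < C0)"
      using nonequiv_bound[OF d ne] by blast
    have ne2: "\<not> gromov_equiv \<beta> \<alpha>" using ne equiv_sym by blast
    obtain C0' where C0': "\<forall>\<alpha>' \<beta>'. gromov_equiv \<beta> \<alpha>' \<longrightarrow> gromov_equiv \<alpha> \<beta>' \<longrightarrow>
           (\<exists>N. \<forall>m\<ge>N. \<forall>n\<ge>N. gromov_product x (\<alpha>' m) (\<beta>' n) < C0')"
      using nonequiv_bound[OF d ne2] by blast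
    define B where "B = \<bar>C0\<bar> + \<bar>C0'\<bar> + \<bar>C1\<bar> + \<bar>C2\<bar> + 1"
    obtain N4 where N4: "\<forall>n\<ge>N4. B \<le> dist x (s n)" using seq_unbounded[OF gs] by blast
    define n where "n = max (max N1 N2) N4"
    obtain k where k: "k \<in> K" "s n = act k x" using s by blast
    have kc: "k \<in> carrier G" using k Kc by blast
    have ik: "inv\<^bsub>G\<^esub> k \<in> K" using Ki k by blast
    have ikc: "inv\<^bsub>G\<^esub> k \<in> carrier G" using ik Kc by blast
    define \<alpha>' where "\<alpha>' = (\<lambda>m. act (inv\<^bsub>G\<^esub> k) (\<alpha> m))"
    define \<beta>' where "\<beta>' = (\<lambda>m. act (inv\<^bsub>G\<^esub> k) (\<beta> m))"
    have ne': "\<not> gromov_equiv \<alpha>' \<beta>'"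
      using equiv_act_rev[OF grp ia ikc, of \<alpha> \<beta>] ne unfolding \<alpha>'_def \<beta>'_def by blast
    have Pk: "(gromov_equiv \<alpha> \<alpha>' \<or> gromov_equiv \<beta> \<alpha>') \<and> (gromov_equiv \<alpha> \<beta>' \<or> gromov_equiv \<beta> \<beta>')"
      using P ik unfolding \<alpha>'_def \<beta>'_def by blast
    have "\<exists>N3. \<forall>m\<ge>N3. gromov_product x (\<alpha>' m) (\<beta>' m) < \<bar>C0\<bar> + \<bar>C0'\<bar>"
    proof -
      consider "gromov_equiv \<alpha> \<alpha>'" "gromov_equiv \<beta> \<beta>'" | "gromov_equiv \<beta> \<alpha>'" "gromov_equiv \<alpha> \<beta>'"
        | "gromov_equiv \<alpha> \<alpha>'" "gromov_equiv \<alpha> \<beta>'" | "gromov_equiv \<beta> \<alpha>'" "gromov_equiv \<beta> \<beta>'"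
        using Pk by blast
      then show ?thesis
      proof cases
        case 1
        then obtain N where "\<forall>m\<ge>N. \<forall>n\<ge>N. gromov_product x (\<alpha>' m) (\<beta>' n) < C0" using C0[rule_format, of \<alpha>' \<beta>'] by blast
        then show ?thesis by (intro exI[of _ N]) force
      next
        case 2
        then obtain N where N: "\<forall>m\<ge>N. \<forall>n\<ge>N. gromov_product x (\<alpha>' m) (\<beta>' n) < C0'" using C0'[rule_format, of \<alpha>' \<beta>'] by blast
        show ?thesis
        proof (intro exI[of _ N] allI impI)
          fix m assume "N \<le> m"
          then have "gromov_product x (\<alpha>' m) (\<beta>' m) < C0'" using N by blast
          then show "gromov_product x (\<alpha>' m) (\<beta>' m) < \<bar>C0\<bar> + \<bar>C0'\<bar>" by linarith
        qed
      next
        case 3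
        then have "gromov_equiv \<alpha>' \<beta>'" using equiv_sym equiv_trans[OF d] by blast
        then show ?thesis using ne' by blast
      next
        case 4
        then have "gromov_equiv \<alpha>' \<beta>'" using equiv_sym equiv_trans[OF d] by blast
        then show ?thesis using ne' by blast
      qed
    qed
    then obtain N3 where N3: "\<forall>m\<ge>N3. gromov_product x (\<alpha>' m) (\<beta>' m) < \<bar>C0\<bar> + \<bar>C0'\<bar>" by blast
    define m where "m = max (max N1 N2) N3"
    have "gromov_product (s n) (\<alpha> m) (\<beta> m) = gromov_product (act (inv\<^bsub>G\<^esub> k) (s n)) (\<alpha>' m) (\<beta>' m)"
      unfolding \<alpha>'_def \<beta>'_def using gp_act[OF grp ia ikc] by simp
    also have "act (inv\<^bsub>G\<^esub> k) (s n) = x" using k act_inv1[OF grp ia kc] by simp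
    finally have g1: "gromov_product (s n) (\<alpha> m) (\<beta> m) < \<bar>C0\<bar> + \<bar>C0'\<bar>" using N3 unfolding m_def by simp
    have g2: "gromov_product x (s n) (\<alpha> m) < C1" using N1 unfolding n_def m_def by simp
    have g3: "gromov_product x (s n) (\<beta> m) < C2" using N2 unfolding n_def m_def by simp
    have g4: "B \<le> dist x (s n)" using N4 unfolding n_def by simp
    have g5: "0 \<le> gromov_product x (\<alpha> m) (\<beta> m)" by (rule gp_nonneg)
    have g6: "gromov_product x (s n) (\<alpha> m) + gromov_product x (s n) (\<beta> m) = dist x (s n) + gromov_product x (\<alpha> m) (\<beta> m) - gromov_product (s n) (\<alpha> m) (\<beta> m)"
      by (rule gp_ident)
    show False using g1 g2 g3 g4 g5 g6 unfolding B_def by linarith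
  qed
  then show "\<xi> \<in> {cls \<alpha>, cls \<beta>}" using xi cls_eq[OF d] by blast
qed



context group begin

lemma cancel_l: "c \<in> carrier G \<Longrightarrow> z \<in> carrier G \<Longrightarrow> inv c \<otimes> (c \<otimes> z) = z"
  by (simp add: m_assoc[symmetric, of "inv c" c z] m_assoc[symmetric, of c "inv c" z])

lemma cancel_l2: "c \<in> carrier G \<Longrightarrow> z \<in> carrier G \<Longrightarrow> c \<otimes> (inv c \<otimes> z) = z"
  by (simp add: m_assoc[symmetric, of "inv c" c z] m_assoc[symmetric, of c "inv c" z])

lemma cancel_r: "c \<in> carrier G \<Longrightarrow> z \<in> carrier G \<Longrightarrow> z \<otimes> inv c \<otimes> c = z"
  by (simp add: m_assoc)

lemma cancel_r2: "c \<in> carrier G \<Longrightarrow> z \<in> carrier G \<Longrightarrow> z \<otimes> c \<otimes> inv c = z"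
  by (simp add: m_assoc)

lemma conj_pow:
  assumes c: "c \<in> carrier G" and x: "x \<in> carrier G"
  shows "(c \<otimes> x \<otimes> inv c) [^] (n::nat) = c \<otimes> x [^] n \<otimes> inv c"
proof (induction n)
  case 0 then show ?case using c by simp
next
  case (Suc n)
  have "(c \<otimes> x \<otimes> inv c) [^] Suc n = (c \<otimes> x [^] n \<otimes> inv c) \<otimes> (c \<otimes> x \<otimes> inv c)"
    using Suc by (simp add: nat_pow_Suc)
  also have "\<dots> = c \<otimes> (x [^] n \<otimes> x) \<otimes> inv c"
    using c x by (simp add: m_assoc cancel_l)
  also have "\<dots> = c \<otimes> x [^] Suc n \<otimes> inv c" by (simp add: nat_pow_Suc)
  finally show ?case .
qed

lemma ord_conj:
  assumes c: "c \<in> carrier G" and x: "x \<in> carrier G"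
  shows "ord (c \<otimes> x \<otimes> inv c) = ord x"
proof -
  have cx: "c \<otimes> x \<otimes> inv c \<in> carrier G" using c x by simp
  have "(c \<otimes> x \<otimes> inv c) [^] n = \<one> \<longleftrightarrow> x [^] n = \<one>" for n :: nat
  proof -
    have "(c \<otimes> x \<otimes> inv c) [^] n = c \<otimes> x [^] n \<otimes> inv c" by (rule conj_pow[OF c x])
    moreover have "c \<otimes> y \<otimes> inv c = \<one> \<longleftrightarrow> y = \<one>" if y: "y \<in> carrier G" for y
    proof
      assume "c \<otimes> y \<otimes> inv c = \<one>"
      then have "inv c \<otimes> (c \<otimes> y \<otimes> inv c) \<otimes> c = inv c \<otimes> \<one> \<otimes> c" by simp
      then show "y = \<one>" using c y by (simp add: m_assoc cancel_l)
    next
      assume "y = \<one>" then show "c \<otimes> y \<otimes> inv c = \<one>" using c by simp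
    qed
    ultimately show ?thesis using x by simp
  qed
  then have E: "ord (c \<otimes> x \<otimes> inv c) dvd n \<longleftrightarrow> ord x dvd n" for n
    using pow_eq_id[OF cx, of n] pow_eq_id[OF x, of n] by simp
  show ?thesis using E[of "ord x"] E[of "ord (c \<otimes> x \<otimes> inv c)"] dvd_antisym by simp
qed

lemma conj_gen:
  assumes H: "subgroup H G" and c: "c \<in> carrier G" and S: "S \<subseteq> carrier G"
    and cs: "\<forall>s\<in>S. c \<otimes> s \<otimes> inv c \<in> H" and y: "y \<in> generate G S"
  shows "c \<otimes> y \<otimes> inv c \<in> H"
  using y
proof (induct y rule: generate.induct)
  case one then show ?case using c subgroup.one_closed[OF H] by simp
next
  case (incl h) then show ?case using cs by blast
next
  case (inv h)
  then have h: "h \<in> carrier G" using S by blast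
  have "inv (c \<otimes> h \<otimes> inv c) = c \<otimes> inv h \<otimes> inv c"
    using c h by (simp add: inv_mult_group m_assoc)
  then show ?case using subgroup.m_inv_closed[OF H, of "c \<otimes> h \<otimes> inv c"] cs inv by simp
next
  case (eng h1 h2)
  have h1: "h1 \<in> carrier G" using generate_in_carrier[OF S eng(1)] .
  have h2: "h2 \<in> carrier G" using generate_in_carrier[OF S eng(3)] .
  have "(c \<otimes> h1 \<otimes> inv c) \<otimes> (c \<otimes> h2 \<otimes> inv c) = c \<otimes> (h1 \<otimes> h2) \<otimes> inv c"
    using c h1 h2 by (simp add: m_assoc cancel_l)
  then show ?case using subgroup.m_closed[OF H eng(2) eng(4)] by simp
qed

lemma sub_of_cyclic:
  assumes h: "h \<in> carrier G" and fin: "finite (generate G {h})" and a: "a \<in> generate G {h}"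
  shows "generate G {a} = {x \<in> generate G {h}. x [^] ord a = \<one>}"
proof -
  define C where "C = generate G {h}"
  have hC: "subgroup C G" unfolding C_def using generate_is_subgroup h by simp
  define n where "n = ord h"
  have nC: "n = card C" unfolding n_def C_def by (rule generate_pow_card[OF h])
  have "\<one> \<in> C" using subgroup.one_closed[OF hC] .
  then have npos: "n > 0" using nC fin C_def card_gt_0_iff by blast
  have Cnat: "C = {h [^] k | k. k \<in> (UNIV :: nat set)}" unfolding C_def
    using generate_pow_nat[OF h] npos n_def by simp
  have ac: "a \<in> carrier G" using a hC C_def subgroup.subset by blast
  obtain i :: nat where ai: "a = h [^] i" using a Cnat C_def by blast
  have hn: "h [^] n = \<one>" unfolding n_def using h by simp
  have "a [^] n = \<one>" unfolding ai using h hn by (simp add: nat_pow_pow mult.commute[of i n] nat_pow_pow[symmetric])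
  then have dn: "ord a dvd n" using pow_eq_id[OF ac] by simp
  define d where "d = ord a"
  have dpos: "d > 0" using dn npos d_def by (metis dvd_0_left_iff gr0I less_not_refl)
  define e where "e = n div d"
  have nde: "n = d * e" unfolding e_def using dn d_def by simp
  define Ker where "Ker = {x \<in> C. x [^] d = \<one>}"
  have finK: "finite Ker" unfolding Ker_def using fin C_def by simp
  have K_sub: "Ker \<subseteq> (\<lambda>t. h [^] (e * t)) ` {..<d}"
  proof
    fix x assume "x \<in> Ker"
    then have xC: "x \<in> C" and xd: "x [^] d = \<one>" unfolding Ker_def by auto
    obtain j :: nat where xj: "x = h [^] j" using xC Cnat by blast
    have "h [^] (j * d) = \<one>" using xd xj h by (simp add: nat_pow_pow)
    then have "n dvd j * d" using pow_eq_id[OF h] n_def by simp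
    then have "d * e dvd d * j" using nde by (simp add: mult.commute)
    then have "e dvd j" using dpos by simp
    then obtain t where jt: "j = e * t" by blast
    have "e * t = e * (t mod d) + n * (t div d)" using nde
      by (metis add.commute mult.assoc mult.commute distrib_left mod_mult_div_eq)
    then have "h [^] (e * t) = h [^] (e * (t mod d)) \<otimes> (h [^] n) [^] (t div d)"
      using h by (simp add: nat_pow_mult nat_pow_pow)
    then have "x = h [^] (e * (t mod d))" using hn h xj jt by simp
    moreover have "t mod d < d" using dpos by simp
    ultimately show "x \<in> (\<lambda>t. h [^] (e * t)) ` {..<d}" by blast
  qed
  have "card Ker \<le> d"
  proof -
    have "card Ker \<le> card ((\<lambda>t. h [^] (e * t)) ` {..<d})" using K_sub by (simp add: card_mono)
    also have "\<dots> \<le> card {..<d}" by (rule card_image_le) simp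
    finally show ?thesis by simp
  qed
  moreover have gK: "generate G {a} \<subseteq> Ker"
  proof
    fix y assume y: "y \<in> generate G {a}"
    have "generate G {a} \<subseteq> C" using generate_subgroup_incl[OF _ hC] a C_def by simp
    then have yC: "y \<in> C" using y by blast
    have "ord a \<noteq> 0" using dpos d_def by simp
    then obtain k :: nat where "y = a [^] k" using y generate_pow_nat[OF ac] by blast
    then have "y [^] d = (a [^] d) [^] k" using ac by (simp add: nat_pow_pow mult.commute)
    then have "y [^] d = \<one>" using ac d_def by simp
    then show "y \<in> Ker" unfolding Ker_def using yC by simp
  qed
  moreover have "card (generate G {a}) = d" using generate_pow_card[OF ac] d_def by simp
  ultimately have "generate G {a} = Ker" using card_seteq[OF finK gK] by simp
  then show ?thesis unfolding Ker_def C_def d_def by simp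
qed

lemma cyc_unique:
  assumes h: "h \<in> carrier G" and fin: "finite (generate G {h})"
    and a: "a \<in> generate G {h}" and b: "b \<in> generate G {h}" and ab: "ord a = ord b"
  shows "generate G {a} = generate G {b}"
  using sub_of_cyclic[OF h fin a] sub_of_cyclic[OF h fin b] ab by simp

lemma memT: "h = y \<otimes> a \<Longrightarrow> y \<in> Y \<Longrightarrow> a \<in> A \<Longrightarrow> h \<in> {y \<otimes> a | y a. y \<in> Y \<and> a \<in> A}"
  by blast

lemma caseA_struct:
  assumes g: "g \<in> carrier G" and g0: "g0 \<in> carrier G"
    and c1: "g \<otimes> g0 \<otimes> inv g \<in> generate G {g0}"
    and c2: "inv g \<otimes> g0 \<otimes> g \<in> generate G {g0}"
  shows "generate G {g0, g} \<subseteq> {y \<otimes> a | y a. y \<in> generate G {g} \<and> a \<in> generate G {g0}}"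
proof -
  define A0 where "A0 = generate G {g0}"
  have A0s: "subgroup A0 G" unfolding A0_def using generate_is_subgroup g0 by simp
  have A0c: "A0 \<subseteq> carrier G" using A0s subgroup.subset by blast
  define N where "N = {y \<in> carrier G. (\<forall>a\<in>A0. y \<otimes> a \<otimes> inv y \<in> A0) \<and> (\<forall>a\<in>A0. inv y \<otimes> a \<otimes> y \<in> A0)}"
  have Ns: "subgroup N G"
  proof (rule subgroupI)
    show "N \<subseteq> carrier G" unfolding N_def by blast
    show "N \<noteq> {}"
    proof -
      have "\<one> \<in> N" unfolding N_def using A0c by auto
      then show ?thesis by blast
    qed
  next
    fix y assume y: "y \<in> N"
    then have yc: "y \<in> carrier G" unfolding N_def by blast
    show "inv y \<in> N" using y yc unfolding N_def by simp
  next
    fix y z assume y: "y \<in> N" and z: "z \<in> N"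
    then have yc: "y \<in> carrier G" and zc: "z \<in> carrier G" unfolding N_def by blast+
    have "y \<otimes> z \<otimes> a \<otimes> inv (y \<otimes> z) \<in> A0" if a: "a \<in> A0" for a
    proof -
      have ac: "a \<in> carrier G" using a A0c by blast
      have "z \<otimes> a \<otimes> inv z \<in> A0" using z a unfolding N_def by blast
      then have "y \<otimes> (z \<otimes> a \<otimes> inv z) \<otimes> inv y \<in> A0" using y unfolding N_def by blast
      moreover have "y \<otimes> (z \<otimes> a \<otimes> inv z) \<otimes> inv y = y \<otimes> z \<otimes> a \<otimes> inv (y \<otimes> z)"
        using yc zc ac by (simp add: inv_mult_group m_assoc)
      ultimately show ?thesis by simp
    qed
    moreover have "inv (y \<otimes> z) \<otimes> a \<otimes> (y \<otimes> z) \<in> A0" if a: "a \<in> A0" for a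
    proof -
      have ac: "a \<in> carrier G" using a A0c by blast
      have "inv y \<otimes> a \<otimes> y \<in> A0" using y a unfolding N_def by blast
      then have "inv z \<otimes> (inv y \<otimes> a \<otimes> y) \<otimes> z \<in> A0" using z unfolding N_def by blast
      moreover have "inv z \<otimes> (inv y \<otimes> a \<otimes> y) \<otimes> z = inv (y \<otimes> z) \<otimes> a \<otimes> (y \<otimes> z)"
        using yc zc ac by (simp add: inv_mult_group m_assoc)
      ultimately show ?thesis by simp
    qed
    ultimately show "y \<otimes> z \<in> N" unfolding N_def using yc zc by blast
  qed
  have gN: "g \<in> N"
  proof -
    have "\<forall>a\<in>A0. g \<otimes> a \<otimes> inv g \<in> A0"
      using conj_gen[OF A0s g, of "{g0}"] g0 c1 unfolding A0_def by blast
    moreover have "\<forall>a\<in>A0. inv g \<otimes> a \<otimes> inv (inv g) \<in> A0"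
      using conj_gen[OF A0s inv_closed[OF g], of "{g0}"] g0 c2 g unfolding A0_def by simp
    ultimately show ?thesis unfolding N_def using g by simp
  qed
  have gg: "generate G {g} \<subseteq> N" using generate_subgroup_incl[OF _ Ns] gN by simp
  have ggc: "generate G {g} \<subseteq> carrier G" using generate_incl g by simp
  show ?thesis unfolding A0_def[symmetric]
  proof
    fix k assume "k \<in> generate G {g0, g}"
    then show "k \<in> {y \<otimes> a | y a. y \<in> generate G {g} \<and> a \<in> A0}"
    proof (induct k rule: generate.induct)
      case one
      show ?case by (rule memT[OF _ generate.one subgroup.one_closed[OF A0s]]) simp
    next
      case (incl h)
      then consider "h = g0" | "h = g" by blast
      then show ?case
      proof cases
        case 1
        have "g0 \<in> A0" unfolding A0_def by (rule generate.incl) simp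
        then show ?thesis using 1 g0 by (intro memT[OF _ generate.one]) simp_all
      next
        case 2
        have "g \<in> generate G {g}" by (rule generate.incl) simp
        then show ?thesis using 2 g by (intro memT[OF _ _ subgroup.one_closed[OF A0s]]) simp_all
      qed
    next
      case (inv h)
      then consider "h = g0" | "h = g" by blast
      then show ?case
      proof cases
        case 1
        have "inv g0 \<in> A0" unfolding A0_def by (rule generate.inv) simp
        then show ?thesis using 1 g0 by (intro memT[OF _ generate.one]) simp_all
      next
        case 2
        have "inv g \<in> generate G {g}" by (rule generate.inv) simp
        then show ?thesis using 2 g by (intro memT[OF _ _ subgroup.one_closed[OF A0s]]) simp_all
      qed
    next
      case (eng h1 h2)
      obtain y1 a1 where 1: "h1 = y1 \<otimes> a1" "y1 \<in> generate G {g}" "a1 \<in> A0" using eng(2) by blast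
      obtain y2 a2 where 2: "h2 = y2 \<otimes> a2" "y2 \<in> generate G {g}" "a2 \<in> A0" using eng(4) by blast
      have c: "y1 \<in> carrier G" "y2 \<in> carrier G" "a1 \<in> carrier G" "a2 \<in> carrier G"
        using 1(2) 1(3) 2(2) 2(3) ggc A0c by (meson subsetD)+
      have "y2 \<in> N" using gg 2(2) by blast
      then have "inv y2 \<otimes> a1 \<otimes> y2 \<in> A0" using 1(3) unfolding N_def by blast
      then have i1: "(inv y2 \<otimes> a1 \<otimes> y2) \<otimes> a2 \<in> A0" using subgroup.m_closed[OF A0s _ 2(3)] by blast
      have i2: "y1 \<otimes> y2 \<in> generate G {g}" by (rule generate.eng[OF 1(2) 2(2)])
      have e: "h1 \<otimes> h2 = (y1 \<otimes> y2) \<otimes> ((inv y2 \<otimes> a1 \<otimes> y2) \<otimes> a2)"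
        using c 1(1) 2(1) by (simp add: m_assoc cancel_l2)
      show ?case by (rule memT[OF e i2 i1])
    qed
  qed
qed

end



definition Qp :: "('g, 'b) monoid_scheme \<Rightarrow> ('g \<Rightarrow> 'x::metric_space \<Rightarrow> 'x) \<Rightarrow> (nat \<Rightarrow> 'x) \<Rightarrow> (nat \<Rightarrow> 'x) \<Rightarrow> 'g \<Rightarrow> bool" where
  "Qp G act \<alpha> \<beta> k \<longleftrightarrow> (gromov_equiv \<alpha> (\<lambda>n. act k (\<alpha> n)) \<or> gromov_equiv \<beta> (\<lambda>n. act k (\<alpha> n))) \<and>
     (gromov_equiv \<alpha> (\<lambda>n. act k (\<beta> n)) \<or> gromov_equiv \<beta> (\<lambda>n. act k (\<beta> n)))"

lemma Q_lemmas:
  fixes G :: "('g, 'b) monoid_scheme" and act :: "'g \<Rightarrow> 'x::metric_space \<Rightarrow> 'x"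
  assumes d: "delta_hyperbolic TYPE('x) \<delta>" and grp: "group G" and ia: "isometric_action G act"
    and ga: "gromov_seq \<alpha>" and gb: "gromov_seq \<beta>" and ne: "\<not> gromov_equiv \<alpha> \<beta>"
  shows Q_one: "Qp G act \<alpha> \<beta> \<one>\<^bsub>G\<^esub>"
    and Q_mult: "\<lbrakk>k1 \<in> carrier G; k2 \<in> carrier G; Qp G act \<alpha> \<beta> k1; Qp G act \<alpha> \<beta> k2\<rbrakk> \<Longrightarrow> Qp G act \<alpha> \<beta> (k1 \<otimes>\<^bsub>G\<^esub> k2)"
    and Q_inv: "\<lbrakk>k \<in> carrier G; Qp G act \<alpha> \<beta> k\<rbrakk> \<Longrightarrow> Qp G act \<alpha> \<beta> (inv\<^bsub>G\<^esub> k)"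
proof -
  have eaa: "gromov_equiv \<alpha> \<alpha>" using ga seq_equiv by blast
  have ebb: "gromov_equiv \<beta> \<beta>" using gb seq_equiv by blast
  have tr: "gromov_equiv u v \<Longrightarrow> gromov_equiv v w \<Longrightarrow> gromov_equiv u w" for u v w :: "nat \<Rightarrow> 'x"
    by (rule equiv_trans[OF d])
  show "Qp G act \<alpha> \<beta> \<one>\<^bsub>G\<^esub>" unfolding Qp_def using act_one[OF grp ia] eaa ebb by simp
  show "Qp G act \<alpha> \<beta> (k1 \<otimes>\<^bsub>G\<^esub> k2)" if k1: "k1 \<in> carrier G" and k2: "k2 \<in> carrier G"
    and q1: "Qp G act \<alpha> \<beta> k1" and q2: "Qp G act \<alpha> \<beta> k2" for k1 k2
  proof -
    have step: "gromov_equiv \<alpha> (\<lambda>n. act k1 (u n)) \<or> gromov_equiv \<beta> (\<lambda>n. act k1 (u n))"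
      if u: "gromov_equiv \<alpha> u \<or> gromov_equiv \<beta> u" for u
    proof -
      from u consider "gromov_equiv \<alpha> u" | "gromov_equiv \<beta> u" by blast
      then show ?thesis
      proof cases
        case 1
        then have e: "gromov_equiv (\<lambda>n. act k1 (\<alpha> n)) (\<lambda>n. act k1 (u n))" by (rule equiv_act[OF grp ia k1])
        from q1 have "gromov_equiv \<alpha> (\<lambda>n. act k1 (\<alpha> n)) \<or> gromov_equiv \<beta> (\<lambda>n. act k1 (\<alpha> n))" unfolding Qp_def by blast
        then show ?thesis using tr[OF _ e] by blast
      next
        case 2
        then have e: "gromov_equiv (\<lambda>n. act k1 (\<beta> n)) (\<lambda>n. act k1 (u n))" by (rule equiv_act[OF grp ia k1])
        from q1 have "gromov_equiv \<alpha> (\<lambda>n. act k1 (\<beta> n)) \<or> gromov_equiv \<beta> (\<lambda>n. act k1 (\<beta> n))" unfolding Qp_def by blast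
        then show ?thesis using tr[OF _ e] by blast
      qed
    qed
    have m: "act (k1 \<otimes>\<^bsub>G\<^esub> k2) y = act k1 (act k2 y)" for y using act_mult[OF grp ia k1 k2] .
    have A: "gromov_equiv \<alpha> (\<lambda>n. act k2 (\<alpha> n)) \<or> gromov_equiv \<beta> (\<lambda>n. act k2 (\<alpha> n))" using q2 unfolding Qp_def by blast
    have B: "gromov_equiv \<alpha> (\<lambda>n. act k2 (\<beta> n)) \<or> gromov_equiv \<beta> (\<lambda>n. act k2 (\<beta> n))" using q2 unfolding Qp_def by blast
    show ?thesis unfolding Qp_def m using step[OF A] step[OF B] by blast
  qed
  show "Qp G act \<alpha> \<beta> (inv\<^bsub>G\<^esub> k)" if k: "k \<in> carrier G" and q: "Qp G act \<alpha> \<beta> k" for k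
  proof -
    have ik: "inv\<^bsub>G\<^esub> k \<in> carrier G" using group.inv_closed[OF grp k] .
    define \<alpha>' where "\<alpha>' = (\<lambda>n. act k (\<alpha> n))"
    define \<beta>' where "\<beta>' = (\<lambda>n. act k (\<beta> n))"
    have ra: "(\<lambda>n. act (inv\<^bsub>G\<^esub> k) (\<alpha>' n)) = \<alpha>" unfolding \<alpha>'_def using act_inv1[OF grp ia k] by simp
    have rb: "(\<lambda>n. act (inv\<^bsub>G\<^esub> k) (\<beta>' n)) = \<beta>" unfolding \<beta>'_def using act_inv1[OF grp ia k] by simp
    have ne': "\<not> gromov_equiv \<alpha>' \<beta>'" using equiv_act_rev[OF grp ia k, of \<alpha> \<beta>] ne unfolding \<alpha>'_def \<beta>'_def by blast
    have bk: "\<And>c v. gromov_equiv c v \<Longrightarrow> gromov_equiv (\<lambda>n. act (inv\<^bsub>G\<^esub> k) (v n)) (\<lambda>n. act (inv\<^bsub>G\<^esub> k) (c n))"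
      using equiv_act[OF grp ia ik] equiv_sym by blast
    have Pk: "(gromov_equiv \<alpha> \<alpha>' \<or> gromov_equiv \<beta> \<alpha>') \<and> (gromov_equiv \<alpha> \<beta>' \<or> gromov_equiv \<beta> \<beta>')"
      using q unfolding Qp_def \<alpha>'_def \<beta>'_def by blast
    consider "gromov_equiv \<alpha> \<alpha>'" "gromov_equiv \<beta> \<beta>'" | "gromov_equiv \<beta> \<alpha>'" "gromov_equiv \<alpha> \<beta>'"
        | "gromov_equiv \<alpha> \<alpha>'" "gromov_equiv \<alpha> \<beta>'" | "gromov_equiv \<beta> \<alpha>'" "gromov_equiv \<beta> \<beta>'"
      using Pk by blast
    then show ?thesis
    proof cases
      case 1
      have "gromov_equiv (\<lambda>n. act (inv\<^bsub>G\<^esub> k) (\<alpha>' n)) (\<lambda>n. act (inv\<^bsub>G\<^esub> k) (\<alpha> n))" by (rule bk[OF 1(1)])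
      then have x: "gromov_equiv \<alpha> (\<lambda>n. act (inv\<^bsub>G\<^esub> k) (\<alpha> n))" unfolding ra .
      have "gromov_equiv (\<lambda>n. act (inv\<^bsub>G\<^esub> k) (\<beta>' n)) (\<lambda>n. act (inv\<^bsub>G\<^esub> k) (\<beta> n))" by (rule bk[OF 1(2)])
      then have y: "gromov_equiv \<beta> (\<lambda>n. act (inv\<^bsub>G\<^esub> k) (\<beta> n))" unfolding rb .
      show ?thesis unfolding Qp_def using x y by blast
    next
      case 2
      have "gromov_equiv (\<lambda>n. act (inv\<^bsub>G\<^esub> k) (\<alpha>' n)) (\<lambda>n. act (inv\<^bsub>G\<^esub> k) (\<beta> n))" by (rule bk[OF 2(1)])
      then have x: "gromov_equiv \<alpha> (\<lambda>n. act (inv\<^bsub>G\<^esub> k) (\<beta> n))" unfolding ra .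
      have "gromov_equiv (\<lambda>n. act (inv\<^bsub>G\<^esub> k) (\<beta>' n)) (\<lambda>n. act (inv\<^bsub>G\<^esub> k) (\<alpha> n))" by (rule bk[OF 2(2)])
      then have y: "gromov_equiv \<beta> (\<lambda>n. act (inv\<^bsub>G\<^esub> k) (\<alpha> n))" unfolding rb .
      show ?thesis unfolding Qp_def using x y by blast
    next
      case 3
      then have "gromov_equiv \<alpha>' \<beta>'" using tr equiv_sym by blast
      then show ?thesis using ne' by blast
    next
      case 4
      then have "gromov_equiv \<alpha>' \<beta>'" using tr equiv_sym by blast
      then show ?thesis using ne' by blast
    qed
  qed
qed


lemma Q_gen:
  fixes G :: "('g, 'b) monoid_scheme" and act :: "'g \<Rightarrow> 'x::metric_space \<Rightarrow> 'x"
  assumes d: "delta_hyperbolic TYPE('x) \<delta>" and grp: "group G" and ia: "isometric_action G act"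
    and ga: "gromov_seq \<alpha>" and gb: "gromov_seq \<beta>" and ne: "\<not> gromov_equiv \<alpha> \<beta>"
    and S: "S \<subseteq> carrier G" and QS: "\<forall>s\<in>S. Qp G act \<alpha> \<beta> s"
    and k: "k \<in> generate G S"
  shows "Qp G act \<alpha> \<beta> k"
  using k
proof (induct k rule: generate.induct)
  case one then show ?case by (rule Q_one[OF d grp ia ga gb ne])
next
  case (incl h) then show ?case using QS by blast
next
  case (inv h) then show ?case using Q_inv[OF d grp ia ga gb ne] QS S by blast
next
  case (eng h1 h2)
  have "h1 \<in> carrier G" "h2 \<in> carrier G" using group.generate_in_carrier[OF grp S] eng(1) eng(3) by blast+
  then show ?case using Q_mult[OF d grp ia ga gb ne] eng(2) eng(4) by blast
qed

lemma in_bd_pair: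
  assumes d: "delta_hyperbolic TYPE('x::metric_space) \<delta>" and "gromov_seq \<alpha>" "gromov_seq \<beta>" "gromov_seq (u::nat\<Rightarrow>'x)"
    and "cls u \<in> {cls \<alpha>, cls \<beta>}"
  shows "gromov_equiv \<alpha> u \<or> gromov_equiv \<beta> u"
  using assms cls_eq_iff[OF d] by blast

lemma elem_of_sub:
  assumes "finite L" "card L \<le> 2" "limit_set act K \<subseteq> L"
  shows "elementary act K"
  unfolding elementary_def non_elementary_def
  using assms finite_subset card_mono by (metis order_trans)

lemma orbit_conj:
  fixes G :: "('g, 'b) monoid_scheme" and act :: "'g \<Rightarrow> 'x::metric_space \<Rightarrow> 'x"
  assumes grp: "group G" and ia: "isometric_action G act" and g: "g \<in> carrier G" and h: "h \<in> carrier G"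
  shows "act g (act h x) = act (g \<otimes>\<^bsub>G\<^esub> h \<otimes>\<^bsub>G\<^esub> inv\<^bsub>G\<^esub> g) (act g x)"
proof -
  have ig: "inv\<^bsub>G\<^esub> g \<in> carrier G" by (rule group.inv_closed[OF grp g])
  have gh: "g \<otimes>\<^bsub>G\<^esub> h \<in> carrier G" by (rule monoid.m_closed[OF group.is_monoid[OF grp] g h])
  have e1: "act (g \<otimes>\<^bsub>G\<^esub> h \<otimes>\<^bsub>G\<^esub> inv\<^bsub>G\<^esub> g) (act g x) = act (g \<otimes>\<^bsub>G\<^esub> h) (act (inv\<^bsub>G\<^esub> g) (act g x))"
    by (rule act_mult[OF grp ia gh ig])
  have e2: "act (inv\<^bsub>G\<^esub> g) (act g x) = x" by (rule act_inv1[OF grp ia g])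
  have e3: "act (g \<otimes>\<^bsub>G\<^esub> h) x = act g (act h x)" by (rule act_mult[OF grp ia g h])
  show ?thesis by (simp only: e1 e2 e3)
qed

lemma orbit_mult:
  fixes G :: "('g, 'b) monoid_scheme" and act :: "'g \<Rightarrow> 'x::metric_space \<Rightarrow> 'x"
  assumes grp: "group G" and ia: "isometric_action G act" and Hs: "subgroup H G"
    and g: "g \<in> H" and y: "y \<in> (\<lambda>h. act h x) ` H"
  shows "act g y \<in> (\<lambda>h. act h x) ` H"
proof -
  obtain h where h: "h \<in> H" "y = act h x" using y by blast
  have gc: "g \<in> carrier G" by (rule subgroup.mem_carrier[OF Hs g])
  have hc: "h \<in> carrier G" by (rule subgroup.mem_carrier[OF Hs h(1)])
  have e: "act g y = act (g \<otimes>\<^bsub>G\<^esub> h) x" unfolding h(2) by (rule act_mult[OF grp ia gc hc, symmetric])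
  have m: "g \<otimes>\<^bsub>G\<^esub> h \<in> H" by (rule subgroup.m_closed[OF Hs g h(1)])
  show ?thesis unfolding e by (rule image_eqI[OF refl m])
qed

lemma orbit_conj2:
  fixes G :: "('g, 'b) monoid_scheme" and act :: "'g \<Rightarrow> 'x::metric_space \<Rightarrow> 'x"
  assumes grp: "group G" and ia: "isometric_action G act" and H'c: "H' \<subseteq> carrier G"
    and g: "g \<in> carrier G" and cj: "\<forall>y\<in>H'. g \<otimes>\<^bsub>G\<^esub> y \<otimes>\<^bsub>G\<^esub> inv\<^bsub>G\<^esub> g \<in> H"
    and y: "y \<in> (\<lambda>h. act h x) ` H'"
  shows "act g y \<in> (\<lambda>h. act h (act g x)) ` H"
proof -
  obtain h where h: "h \<in> H'" "y = act h x" using y by blast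
  have hc: "h \<in> carrier G" using h(1) H'c by blast
  have e: "act g y = act (g \<otimes>\<^bsub>G\<^esub> h \<otimes>\<^bsub>G\<^esub> inv\<^bsub>G\<^esub> g) (act g x)"
    unfolding h(2) by (rule orbit_conj[OF grp ia g hc])
  have m: "g \<otimes>\<^bsub>G\<^esub> h \<otimes>\<^bsub>G\<^esub> inv\<^bsub>G\<^esub> g \<in> H" using cj h(1) by blast
  show ?thesis unfolding e by (rule image_eqI[OF refl m])
qed

theorem lemma3p8:
  fixes G :: "('g, 'b) monoid_scheme"
    and act :: "'g \<Rightarrow> 'x::metric_space \<Rightarrow> 'x"
    and \<delta> :: real
  assumes "group G"
    and "length_space TYPE('x)"
    and "delta_hyperbolic TYPE('x) \<delta>"
    and "isometric_action G act"
    and "\<forall>H. subgroup H G \<longrightarrow> \<not> parabolic act H"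
    and "\<forall>H. subgroup H G \<and> elliptic act H \<longrightarrow> finite H \<and> (\<exists>h\<in>H. H = generate G {h})"
  shows "nu_invariant G act \<le> 2"
proof -
  note grp = assms(1) and d = assms(3) and ia = assms(4) and nopar = assms(5) and ell = assms(6)
  interpret group G by (rule grp)
  have "nu_property G act 2"
    unfolding nu_property_def
  proof (intro ballI impI)
    fix g0 g assume g0: "g0 \<in> carrier G" and g: "g \<in> carrier G"
      and lox: "loxodromic G act g"
      and el: "elementary act (generate G ((\<lambda>i. g [^]\<^bsub>G\<^esub> i \<otimes>\<^bsub>G\<^esub> g0 \<otimes>\<^bsub>G\<^esub> inv\<^bsub>G\<^esub> (g [^]\<^bsub>G\<^esub> i)) ` {0..2::nat}))"
    define g1 where "g1 = g \<otimes>\<^bsub>G\<^esub> g0 \<otimes>\<^bsub>G\<^esub> inv\<^bsub>G\<^esub> g"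
    define g2 where "g2 = g \<otimes>\<^bsub>G\<^esub> g1 \<otimes>\<^bsub>G\<^esub> inv\<^bsub>G\<^esub> g"
    have g1c: "g1 \<in> carrier G" unfolding g1_def using g g0 by simp
    have g2c: "g2 \<in> carrier G" unfolding g2_def using g g1c by simp
    define Gen where "Gen = (\<lambda>i. g [^]\<^bsub>G\<^esub> i \<otimes>\<^bsub>G\<^esub> g0 \<otimes>\<^bsub>G\<^esub> inv\<^bsub>G\<^esub> (g [^]\<^bsub>G\<^esub> i)) ` {0..2::nat}"
    define H where "H = generate G Gen"
    have Genc: "Gen \<subseteq> carrier G" unfolding Gen_def using g g0 by auto
    have Hs: "subgroup H G" unfolding H_def by (rule generate_is_subgroup[OF Genc])
    have "g0 = g [^]\<^bsub>G\<^esub> (0::nat) \<otimes>\<^bsub>G\<^esub> g0 \<otimes>\<^bsub>G\<^esub> inv\<^bsub>G\<^esub> (g [^]\<^bsub>G\<^esub> (0::nat))" using g0 by simp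
    then have "g0 \<in> Gen" unfolding Gen_def by (intro image_eqI[where x="0::nat"]) simp_all
    then have g0H: "g0 \<in> H" unfolding H_def by (rule generate.incl)
    have "g1 = g [^]\<^bsub>G\<^esub> (1::nat) \<otimes>\<^bsub>G\<^esub> g0 \<otimes>\<^bsub>G\<^esub> inv\<^bsub>G\<^esub> (g [^]\<^bsub>G\<^esub> (1::nat))" unfolding g1_def using g by simp
    then have "g1 \<in> Gen" unfolding Gen_def by (intro image_eqI[where x="1::nat"]) simp_all
    then have g1H: "g1 \<in> H" unfolding H_def by (rule generate.incl)
    have "g [^]\<^bsub>G\<^esub> (2::nat) = g \<otimes>\<^bsub>G\<^esub> g" using g by (simp add: numeral_2_eq_2 nat_pow_Suc)
    then have "g [^]\<^bsub>G\<^esub> (2::nat) \<otimes>\<^bsub>G\<^esub> g0 \<otimes>\<^bsub>G\<^esub> inv\<^bsub>G\<^esub> (g [^]\<^bsub>G\<^esub> (2::nat)) = g2"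
      unfolding g2_def g1_def using g g0 by (simp add: inv_mult_group m_assoc)
    then have "g2 \<in> Gen" unfolding Gen_def by (intro image_eqI[where x="2::nat"]) simp_all
    then have g2H: "g2 \<in> H" unfolding H_def by (rule generate.incl)
    have elH: "elementary act H" using el unfolding H_def Gen_def .
    then have LHfin: "finite (limit_set act H)" and LHc: "card (limit_set act H) \<le> 2"
      unfolding elementary_def non_elementary_def by auto
    define H' where "H' = generate G {g0, g1}"
    have H's: "subgroup H' G" unfolding H'_def using generate_is_subgroup g0 g1c by simp
    have H'H: "H' \<subseteq> H" unfolding H'_def using generate_subgroup_incl[OF _ Hs] g0H g1H by simp
    have conjH: "\<forall>y\<in>H'. g \<otimes>\<^bsub>G\<^esub> y \<otimes>\<^bsub>G\<^esub> inv\<^bsub>G\<^esub> g \<in> H"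
    proof -
      have "\<forall>s\<in>{g0, g1}. g \<otimes>\<^bsub>G\<^esub> s \<otimes>\<^bsub>G\<^esub> inv\<^bsub>G\<^esub> g \<in> H"
        using g1H g2H unfolding g1_def g2_def by simp
      moreover have "{g0, g1} \<subseteq> carrier G" using g0 g1c by simp
      ultimately show ?thesis using conj_gen[OF Hs g, of "{g0, g1}"] unfolding H'_def by blast
    qed
    define K where "K = generate G {g0, g}"
    have Ks: "subgroup K G" unfolding K_def using generate_is_subgroup g0 g by simp
    show "elementary act K" unfolding K_def[symmetric]
    proof (cases "finite H'")
      case True
      have "limit_set act H' = {}" by (rule LS_finite[OF True])
      then have "elliptic act H'" unfolding elliptic_def .
      then obtain h where hH': "h \<in> H'" and H'h: "H' = generate G {h}" using ell H's by blast
      have hc: "h \<in> carrier G" using hH' H's subgroup.subset by blast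
      have g0H': "g0 \<in> H'" unfolding H'_def by (rule generate.incl) simp
      have g1H': "g1 \<in> H'" unfolding H'_def by (rule generate.incl) simp
      have ordeq: "ord g0 = ord g1" unfolding g1_def using ord_conj[OF g g0] by simp
      have fin: "finite (generate G {h})" using True H'h by simp
      have geq: "generate G {g0} = generate G {g1}"
        using cyc_unique[OF hc fin, of g0 g1] g0H' g1H' H'h ordeq by simp
      have A0s: "subgroup (generate G {g0}) G" using generate_is_subgroup g0 by simp
      have "g1 \<in> generate G {g1}" by (rule generate.incl) simp
      then have c1: "g \<otimes>\<^bsub>G\<^esub> g0 \<otimes>\<^bsub>G\<^esub> inv\<^bsub>G\<^esub> g \<in> generate G {g0}" using geq g1_def by simp
      have "g0 \<in> generate G {g0}" by (rule generate.incl) simp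
      then have g0g1: "g0 \<in> generate G {g1}" using geq by simp
      have "inv\<^bsub>G\<^esub> g \<otimes>\<^bsub>G\<^esub> g1 \<otimes>\<^bsub>G\<^esub> inv\<^bsub>G\<^esub> (inv\<^bsub>G\<^esub> g) = g0"
        unfolding g1_def using g g0 by (simp add: m_assoc cancel_l)
      then have "\<forall>s\<in>{g1}. inv\<^bsub>G\<^esub> g \<otimes>\<^bsub>G\<^esub> s \<otimes>\<^bsub>G\<^esub> inv\<^bsub>G\<^esub> (inv\<^bsub>G\<^esub> g) \<in> generate G {g0}"
        using \<open>g0 \<in> generate G {g0}\<close> by simp
      then have "inv\<^bsub>G\<^esub> g \<otimes>\<^bsub>G\<^esub> g0 \<otimes>\<^bsub>G\<^esub> inv\<^bsub>G\<^esub> (inv\<^bsub>G\<^esub> g) \<in> generate G {g0}"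
        using conj_gen[OF A0s inv_closed[OF g], of "{g1}" g0] g1c g0g1 by simp
      then have c2: "inv\<^bsub>G\<^esub> g \<otimes>\<^bsub>G\<^esub> g0 \<otimes>\<^bsub>G\<^esub> g \<in> generate G {g0}" using g by simp
      have Kt: "K \<subseteq> {y \<otimes>\<^bsub>G\<^esub> a | y a. y \<in> generate G {g} \<and> a \<in> generate G {g0}}"
        unfolding K_def by (rule caseA_struct[OF g g0 c1 c2])
      have "generate G {g0} \<subseteq> H'" using generate_subgroup_incl[OF _ H's] g0H' by simp
      then have A0fin: "finite (generate G {g0})" using True finite_subset by blast
      have ggc: "generate G {g} \<subseteq> carrier G" using generate_incl g by simp
      have A0c: "generate G {g0} \<subseteq> carrier G" using generate_incl g0 by simp
      obtain \<xi> \<eta> where xe: "limit_set act (generate G {g}) = {\<xi>, \<eta>}"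
        using lox unfolding loxodromic_def lineal_def by blast
      have "limit_set act K \<subseteq> limit_set act (generate G {g})"
      proof
        fix \<zeta> assume "\<zeta> \<in> limit_set act K"
        then obtain x s where s: "\<forall>n. s n \<in> (\<lambda>h. act h x) ` K" and gs: "gromov_seq s" and z: "\<zeta> = cls s"
          using LS_elim[OF d] by blast
        define M where "M = Max ((\<lambda>a. dist (act a x) x) ` generate G {g0})"
        have "\<forall>n. \<exists>y\<in>(\<lambda>h. act h x) ` generate G {g}. dist (s n) y \<le> M"
        proof
          fix n
          obtain k where k: "k \<in> K" "s n = act k x" using s by blast
          then obtain y a where ya: "k = y \<otimes>\<^bsub>G\<^esub> a" "y \<in> generate G {g}" "a \<in> generate G {g0}" using Kt by blast
          have yc: "y \<in> carrier G" using ya(2) ggc by blast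
          have ac: "a \<in> carrier G" using ya(3) A0c by blast
          have "s n = act y (act a x)" using k ya act_mult[OF grp ia yc ac] by simp
          then have "dist (s n) (act y x) = dist (act a x) x" using act_dist[OF grp ia yc] by simp
          also have "\<dots> \<le> M" unfolding M_def using A0fin ya(3) by (intro Max_ge) auto
          finally show "\<exists>y\<in>(\<lambda>h. act h x) ` generate G {g}. dist (s n) y \<le> M" using ya(2) by blast
        qed
        then show "\<zeta> \<in> limit_set act (generate G {g})" using LS_close[OF d gs] z by blast
      qed
      then show ?thesis using elem_of_sub[of "{\<xi>, \<eta>}" act K] xe by (simp add: card_insert_if)
    next
      case False
      have nell: "\<not> elliptic act H'" using ell H's False by blast
      have npar: "\<not> parabolic act H'" using nopar H's by blast
      have sub: "limit_set act H' \<subseteq> limit_set act H" by (rule LS_mono[OF H'H])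
      have fin': "finite (limit_set act H')" using finite_subset[OF sub LHfin] .
      have ne0: "limit_set act H' \<noteq> {}" using nell unfolding elliptic_def .
      have ge2: "2 \<le> card (limit_set act H')"
      proof (rule ccontr)
        assume "\<not> 2 \<le> card (limit_set act H')"
        then have "card (limit_set act H') = 0 \<or> card (limit_set act H') = 1" by linarith
        then show False
        proof
          assume "card (limit_set act H') = 0"
          then show False using fin' ne0 by simp
        next
          assume "card (limit_set act H') = 1"
          then obtain z where "limit_set act H' = {z}" by (rule card_1_singletonE)
          then show False using npar unfolding parabolic_def by blast
        qed
      qed
      have eqL: "limit_set act H' = limit_set act H"
        using card_seteq[OF LHfin sub] LHc ge2 by linarith
      have "card (limit_set act H') = 2" using LHc eqL ge2 by simp
      then obtain a b where ab: "a \<noteq> b" "limit_set act H' = {a, b}" by (meson card_2_iff)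
      have "a \<in> limit_set act H'" using ab by simp
      then obtain x1 \<alpha> where \<alpha>: "\<forall>n. \<alpha> n \<in> (\<lambda>h. act h x1) ` H'" "gromov_seq \<alpha>" "a = cls \<alpha>"
        using LS_elim[OF d] by blast
      have "b \<in> limit_set act H'" using ab by simp
      then obtain x2 \<beta> where \<beta>: "\<forall>n. \<beta> n \<in> (\<lambda>h. act h x2) ` H'" "gromov_seq \<beta>" "b = cls \<beta>"
        using LS_elim[OF d] by blast
      have ne: "\<not> gromov_equiv \<alpha> \<beta>" using cls_eq[OF d, of \<alpha> \<beta>] ab(1) \<alpha>(3) \<beta>(3) by blast
      have LH': "limit_set act H' = {cls \<alpha>, cls \<beta>}" using ab \<alpha>(3) \<beta>(3) by simp
      have LH: "limit_set act H = {cls \<alpha>, cls \<beta>}" using LH' eqL by simp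
      have H'c: "H' \<subseteq> carrier G" using H's subgroup.subset by blast
      have g0H': "g0 \<in> H'" unfolding H'_def by (rule generate.incl) simp
      have Pg0: "gromov_equiv \<alpha> (\<lambda>n. act g0 (\<gamma> n)) \<or> gromov_equiv \<beta> (\<lambda>n. act g0 (\<gamma> n))"
        if \<gamma>: "\<forall>n. \<gamma> n \<in> (\<lambda>h. act h x) ` H'" "gromov_seq \<gamma>" for \<gamma> x
      proof -
        have gs: "gromov_seq (\<lambda>n. act g0 (\<gamma> n))" by (rule seq_act[OF grp ia g0 \<gamma>(2)])
        have "\<forall>n. act g0 (\<gamma> n) \<in> (\<lambda>h. act h x) ` H'"
          using orbit_mult[OF grp ia H's g0H'] \<gamma>(1) by blast
        then have "cls (\<lambda>n. act g0 (\<gamma> n)) \<in> {cls \<alpha>, cls \<beta>}" using LS_intro[OF gs] LH' by blast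
        then show ?thesis by (rule in_bd_pair[OF d \<alpha>(2) \<beta>(2) gs])
      qed
      have Pg: "gromov_equiv \<alpha> (\<lambda>n. act g (\<gamma> n)) \<or> gromov_equiv \<beta> (\<lambda>n. act g (\<gamma> n))"
        if \<gamma>: "\<forall>n. \<gamma> n \<in> (\<lambda>h. act h x) ` H'" "gromov_seq \<gamma>" for \<gamma> x
      proof -
        have gs: "gromov_seq (\<lambda>n. act g (\<gamma> n))" by (rule seq_act[OF grp ia g \<gamma>(2)])
        have "\<forall>n. act g (\<gamma> n) \<in> (\<lambda>h. act h (act g x)) ` H"
          using orbit_conj2[OF grp ia H'c g conjH] \<gamma>(1) by blast
        then have "cls (\<lambda>n. act g (\<gamma> n)) \<in> {cls \<alpha>, cls \<beta>}" using LS_intro[OF gs] LH by blast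
        then show ?thesis by (rule in_bd_pair[OF d \<alpha>(2) \<beta>(2) gs])
      qed
      have Q0: "Qp G act \<alpha> \<beta> g0" unfolding Qp_def using Pg0[OF \<alpha>(1,2)] Pg0[OF \<beta>(1,2)] by blast
      have Q1: "Qp G act \<alpha> \<beta> g" unfolding Qp_def using Pg[OF \<alpha>(1,2)] Pg[OF \<beta>(1,2)] by blast
      have QK: "\<forall>k\<in>K. Qp G act \<alpha> \<beta> k"
      proof
        fix k assume k: "k \<in> K"
        have S: "{g0, g} \<subseteq> carrier G" using g0 g by simp
        have QS: "\<forall>s\<in>{g0, g}. Qp G act \<alpha> \<beta> s" using Q0 Q1 by simp
        show "Qp G act \<alpha> \<beta> k" using k unfolding K_def by (rule Q_gen[OF d grp ia \<alpha>(2) \<beta>(2) ne S QS])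
      qed
      have Kc: "K \<subseteq> carrier G" by (rule subgroup.subset[OF Ks])
      have Ki: "\<forall>k\<in>K. inv\<^bsub>G\<^esub> k \<in> K" using subgroup.m_inv_closed[OF Ks] by blast
      have "limit_set act K \<subseteq> {cls \<alpha>, cls \<beta>}"
        by (rule pair_stab[OF d grp ia \<alpha>(2) \<beta>(2) ne Kc Ki]) (use QK in \<open>simp only: Qp_def\<close>)
      then show ?thesis using elem_of_sub[of "{cls \<alpha>, cls \<beta>}" act K] by (simp add: card_insert_if)
    qed
  qed
  then have "enat 2 \<in> enat ` {m. nu_property G act m}" by simp
  then have "nu_invariant G act \<le> enat 2" unfolding nu_invariant_def by (rule Inf_lower)
  then show ?thesis by (simp add: numeral_eq_enat)
qed

end
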